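(* Suppose all declared valuation functions are symmetric submodular and the item cost functions $c_j:2^N\to\mathbb{R}_{\ge0}$ are arbitrary. Index the players by the iteration in which IACSM removes them from the active set, so that player $i$ is removed (and receives her final bundle $A_i$) in iteration $i$. Then $A_i\subseteq A_{i+1}$ for every $i\in\{1,\dots,n-1\}$.
   Context: Players $N=\{1,\dots,n\}$, items $M=\{1,\dots,m\}$, declared valuations $b_i:2^M\to\mathbb{R}_{\ge0}$ (non-decreasing), item cost functions $c_j:2^N\to\mathbb{R}_{\ge0}$. Symmetric: $f(S)=f(T)$ whenever $|S|=|T|$; submodular: $f(S\cup\{x\})-f(S)\ge f(T\cup\{x\})-f(T)$ for $S\subseteq T$, $x\notin T$. Mechanism IACSM (input: declared valuations $b$): maintain active set $X=N$, sets $T_j=N$ and cost shares $\chi_j=c_j(N)/n$ for all items $j$. While $X\neq\emptyset$: (1) every $i\in X$ computes $A_i\in\arg\max_{S\subseteq M}\{b_i(S)-\sum_{j\in S}\chi_j\}$, choosing among maximizers one of maximum cardinality $k$, and among those the $k$ items with smallest current $\chi_j$ (item ties by index); (2) choose $i^*\in X$ with $|A_{i^*}|$ minimum (ties by smallest index); (3) assign $A_{i^*}$ to $i^*$ permanently and remove $i^*$ from $X$; (4) for every item $j\notin A_{i^*}$ set $T_j:=T_j\setminus\{i^*\}$ and, if $T_j\ne\emptyset$, set $\chi_j:=\max\{\chi_j,c_j(T_j)/|T_j|\}$. Output the assigned bundles and payments $p_i=\sum_{j\in A_i}\chi_j$ with final cost shares. (If several players are removed "simultaneously" at the end, treat them as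 removed one per iteration in a consistent order.) *)

theory Defs
  imports Complex_Main
begin

text \<open>Players are 0..<n, items are 0..<m (the paper's 1..n and 1..m, shifted).
  A mechanism state is (X, T, chi): active players, the sets T_j, the cost shares chi_j.\<close>

type_synonym state = "nat set \<times> (nat \<Rightarrow> nat set) \<times> (nat \<Rightarrow> real)"

definition item_before :: "(nat \<Rightarrow> real) \<Rightarrow> nat \<Rightarrow> nat \<Rightarrow> bool" where
  "item_before chi j j' \<longleftrightarrow> chi j < chi j' \<or> (chi j = chi j' \<and> j < j')"

definition util :: "(nat \<Rightarrow> nat set \<Rightarrow> real) \<Rightarrow> (nat \<Rightarrow> real) \<Rightarrow> nat \<Rightarrow> nat set \<Rightarrow> real" where
  "util b chi i S = b i S - (\<Sum>j\<in>S. chi j)"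

definition maximizers :: "nat \<Rightarrow> (nat \<Rightarrow> nat set \<Rightarrow> real) \<Rightarrow> (nat \<Rightarrow> real) \<Rightarrow> nat \<Rightarrow> nat set set" where
  "maximizers m b chi i =
     {S. S \<subseteq> {0..<m} \<and> (\<forall>S'. S' \<subseteq> {0..<m} \<longrightarrow> util b chi i S' \<le> util b chi i S)}"

definition demand_card :: "nat \<Rightarrow> (nat \<Rightarrow> nat set \<Rightarrow> real) \<Rightarrow> (nat \<Rightarrow> real) \<Rightarrow> nat \<Rightarrow> nat" where
  "demand_card m b chi i = Max (card ` maximizers m b chi i)"

definition demand :: "nat \<Rightarrow> (nat \<Rightarrow> nat set \<Rightarrow> real) \<Rightarrow> (nat \<Rightarrow> real) \<Rightarrow> nat \<Rightarrow> nat set" where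
  "demand m b chi i =
     {j \<in> {0..<m}. card {j' \<in> {0..<m}. item_before chi j' j} < demand_card m b chi i}"

definition chosen :: "nat \<Rightarrow> (nat \<Rightarrow> nat set \<Rightarrow> real) \<Rightarrow> state \<Rightarrow> nat" where
  "chosen m b st = (case st of (X, T, chi) \<Rightarrow>
     (LEAST i. i \<in> X \<and> (\<forall>i'\<in>X. card (demand m b chi i) \<le> card (demand m b chi i'))))"

definition chosen_bundle :: "nat \<Rightarrow> (nat \<Rightarrow> nat set \<Rightarrow> real) \<Rightarrow> state \<Rightarrow> nat set" where
  "chosen_bundle m b st = (case st of (X, T, chi) \<Rightarrow> demand m b chi (chosen m b st))"

definition iacsm_step ::
  "nat \<Rightarrow> (nat \<Rightarrow> nat set \<Rightarrow> real) \<Rightarrow> (nat \<Rightarrow> nat set \<Rightarrow> real) \<Rightarrow> state \<Rightarrow> state" where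
  "iacsm_step m b c st = (case st of (X, T, chi) \<Rightarrow>
     (let i = chosen m b st; A = chosen_bundle m b st in
      (X - {i},
       \<lambda>j. if j \<notin> A then T j - {i} else T j,
       \<lambda>j. if j < m \<and> j \<notin> A \<and> T j - {i} \<noteq> {}
            then max (chi j) (c j (T j - {i}) / real (card (T j - {i})))
            else chi j)))"

definition iacsm_init :: "nat \<Rightarrow> (nat \<Rightarrow> nat set \<Rightarrow> real) \<Rightarrow> state" where
  "iacsm_init n c = ({0..<n}, \<lambda>j. {0..<n}, \<lambda>j. c j {0..<n} / real n)"

definition iacsm_state ::
  "nat \<Rightarrow> nat \<Rightarrow> (nat \<Rightarrow> nat set \<Rightarrow> real) \<Rightarrow> (nat \<Rightarrow> nat set \<Rightarrow> real) \<Rightarrow> nat \<Rightarrow> state" where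
  "iacsm_state n m b c t = (iacsm_step m b c ^^ t) (iacsm_init n c)"

text \<open>Bundle assigned in iteration t (0-based) to the player removed in that iteration.\<close>
definition iacsm_bundle ::
  "nat \<Rightarrow> nat \<Rightarrow> (nat \<Rightarrow> nat set \<Rightarrow> real) \<Rightarrow> (nat \<Rightarrow> nat set \<Rightarrow> real) \<Rightarrow> nat \<Rightarrow> nat set" where
  "iacsm_bundle n m b c t = chosen_bundle m b (iacsm_state n m b c t)"

definition symmetric_on :: "'a set \<Rightarrow> ('a set \<Rightarrow> real) \<Rightarrow> bool" where
  "symmetric_on U f \<longleftrightarrow> (\<forall>S T. S \<subseteq> U \<and> T \<subseteq> U \<and> card S = card T \<longrightarrow> f S = f T)"

definition submodular_on :: "'a set \<Rightarrow> ('a set \<Rightarrow> real) \<Rightarrow> bool" where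
  "submodular_on U f \<longleftrightarrow> (\<forall>S T x. S \<subseteq> T \<and> T \<subseteq> U \<and> x \<in> U - T \<longrightarrow>
      f (insert x S) - f S \<ge> f (insert x T) - f T)"

end

theory Submission
  imports Defs
begin

definition rk :: "nat \<Rightarrow> (nat \<Rightarrow> real) \<Rightarrow> nat \<Rightarrow> nat" where
  "rk m chi j = card {j' \<in> {0..<m}. item_before chi j' j}"

definition PP :: "nat \<Rightarrow> (nat \<Rightarrow> real) \<Rightarrow> nat \<Rightarrow> nat set" where
  "PP m chi k = {j \<in> {0..<m}. rk m chi j < k}"

lemma demand_eq: "demand m b chi i = PP m chi (demand_card m b chi i)"
  unfolding demand_def PP_def rk_def by simp

lemma ib_trans: "item_before chi x y \<Longrightarrow> item_before chi y z \<Longrightarrow> item_before chi x z"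
  unfolding item_before_def by auto

lemma ib_irrefl: "\<not> item_before chi x x"
  unfolding item_before_def by auto

lemma ib_asym: "item_before chi x y \<Longrightarrow> \<not> item_before chi y x"
  unfolding item_before_def by auto

lemma ib_total: "x \<noteq> y \<Longrightarrow> item_before chi x y \<or> item_before chi y x"
  unfolding item_before_def by auto

lemma ib_le: "item_before chi x y \<Longrightarrow> chi x \<le> chi y"
  unfolding item_before_def by auto

lemma rk_less:
  assumes "j < m" "item_before chi j j'"
  shows "rk m chi j < rk m chi j'"
proof -
  have "{x \<in> {0..<m}. item_before chi x j} \<subset> {x \<in> {0..<m}. item_before chi x j'}"
    using assms ib_trans ib_irrefl by fastforce
  then show ?thesis unfolding rk_def by (simp add: psubset_card_mono)
qed

lemma rk_lt: "j < m \<Longrightarrow> rk m chi j < m"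
proof -
  assume j: "j < m"
  have "{x \<in> {0..<m}. item_before chi x j} \<subseteq> {0..<m} - {j}" using ib_irrefl by auto
  then have "rk m chi j \<le> card ({0..<m} - {j})" unfolding rk_def by (simp add: card_mono)
  then show ?thesis using j by simp
qed

lemma rk_inj: "inj_on (rk m chi) {0..<m}"
proof (rule inj_onI)
  fix x y assume "x \<in> {0..<m}" "y \<in> {0..<m}" "rk m chi x = rk m chi y"
  then show "x = y" using ib_total[of x y chi] rk_less[of x m chi y] rk_less[of y m chi x] by fastforce
qed

lemma rk_bij: "bij_betw (rk m chi) {0..<m} {0..<m}"
proof -
  have sub: "rk m chi ` {0..<m} \<subseteq> {0..<m}" using rk_lt by auto
  have "card (rk m chi ` {0..<m}) = m" using rk_inj card_image by fastforce
  then have "rk m chi ` {0..<m} = {0..<m}" using sub by (simp add: card_subset_eq)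
  then show ?thesis using rk_inj by (simp add: bij_betw_def)
qed

lemma rk_ex: "k < m \<Longrightarrow> \<exists>e<m. rk m chi e = k"
  using rk_bij[of m chi] unfolding bij_betw_def by (metis atLeastLessThan_iff imageE zero_le)

lemma card_PP: "k \<le> m \<Longrightarrow> card (PP m chi k) = k"
proof -
  assume k: "k \<le> m"
  have "rk m chi ` PP m chi k = {0..<k}"
  proof
    show "rk m chi ` PP m chi k \<subseteq> {0..<k}" unfolding PP_def by auto
    show "{0..<k} \<subseteq> rk m chi ` PP m chi k"
    proof
      fix x assume "x \<in> {0..<k}"
      then obtain e where "e < m" "rk m chi e = x" using rk_ex[of x m chi] k by auto
      then show "x \<in> rk m chi ` PP m chi k" unfolding PP_def using \<open>x \<in> {0..<k}\<close> by force
    qed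
  qed
  moreover have "inj_on (rk m chi) (PP m chi k)"
    using rk_inj by (rule inj_on_subset) (auto simp: PP_def)
  ultimately show ?thesis by (metis card_atLeastLessThan card_image diff_zero)
qed

lemma PP_sub: "PP m chi k \<subseteq> {0..<m}" unfolding PP_def by auto

lemma rk_order:
  assumes "j < m" "j' < m" "rk m chi j < rk m chi j'"
  shows "item_before chi j j'"
  using assms ib_total[of j j' chi] rk_less[of j' m chi j] by fastforce

lemma prefix_sum:
  assumes S: "S \<subseteq> {0..<m}"
  shows "sum chi (PP m chi (card S)) \<le> sum chi S"
proof -
  let ?P = "PP m chi (card S)"
  have fS: "finite S" using finite_subset[OF S] by simp
  have cS: "card S \<le> m" using card_mono[OF _ S] by simp
  have fP: "finite ?P" using finite_subset[OF PP_sub] by simp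
  have cP: "card ?P = card S" using card_PP cS by blast
  have ceq: "card (?P - S) = card (S - ?P)"
  proof -
    have "card (?P - S) = card ?P - card (?P \<inter> S)" using fP by (simp add: card_Diff_subset_Int)
    moreover have "card (S - ?P) = card S - card (S \<inter> ?P)" using fS by (simp add: card_Diff_subset_Int)
    ultimately show ?thesis using cP by (simp add: Int_commute)
  qed
  have ord: "chi x \<le> chi y" if "x \<in> ?P - S" "y \<in> S - ?P" for x y
  proof -
    have "x < m" "rk m chi x < card S" using that unfolding PP_def by auto
    moreover have "y < m" "\<not> rk m chi y < card S" using that S unfolding PP_def by auto
    ultimately show ?thesis using rk_order[of x m y chi] ib_le by fastforce
  qed
  have key: "sum chi (?P - S) \<le> sum chi (S - ?P)"
  proof (cases "?P - S = {}")
    case True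
    then have "card (S - ?P) = 0" using ceq by (metis card.empty)
    then have "S - ?P = {}" using fS by simp
    then show ?thesis using True by simp
  next
    case False
    define c0 where "c0 = Max (chi ` (?P - S))"
    have f1: "finite (?P - S)" using fP by simp
    have "sum chi (?P - S) \<le> of_nat (card (?P - S)) * c0"
      using sum_bounded_above[of "?P - S" chi c0] f1 unfolding c0_def by auto
    moreover have "of_nat (card (S - ?P)) * c0 \<le> sum chi (S - ?P)"
    proof -
      have "\<forall>y\<in>S - ?P. c0 \<le> chi y"
        using ord False f1 unfolding c0_def by (simp add: Max_le_iff)
      then show ?thesis using sum_bounded_below[of "S - ?P" c0 chi] by auto
    qed
    ultimately show ?thesis using ceq by simp
  qed
  have "sum chi ?P = sum chi (?P \<inter> S) + sum chi (?P - S)"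
    using fP by (rule sum.Int_Diff)
  moreover have "sum chi S = sum chi (S \<inter> ?P) + sum chi (S - ?P)"
    using fS by (rule sum.Int_Diff)
  moreover have "S \<inter> ?P = ?P \<inter> S" by blast
  ultimately show ?thesis using key by simp
qed


lemma maxi_ex: "\<exists>S. S \<in> maximizers m b chi i"
proof -
  let ?F = "Pow {0..<m}"
  have fF: "finite ?F" by simp
  have nF: "{} \<in> ?F" by simp
  let ?v = "Max (util b chi i ` ?F)"
  have "?v \<in> util b chi i ` ?F" using fF nF by (intro Max_in) auto
  then obtain S where S: "S \<in> ?F" "?v = util b chi i S" by (rule imageE)
  have "util b chi i S' \<le> util b chi i S" if "S' \<subseteq> {0..<m}" for S'
  proof -
    have "util b chi i S' \<in> util b chi i ` ?F" using that by simp
    then have "util b chi i S' \<le> ?v" using Max_ge[OF finite_imageI[OF fF]] by blast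
    then show ?thesis using S(2) by linarith
  qed
  then show ?thesis using S(1) unfolding maximizers_def by blast
qed

lemma maxi_fin: "finite (maximizers m b chi i)"
proof -
  have "maximizers m b chi i \<subseteq> Pow {0..<m}" unfolding maximizers_def by auto
  then show ?thesis by (rule finite_subset) simp
qed

lemma maxi_sub: "S \<in> maximizers m b chi i \<Longrightarrow> S \<subseteq> {0..<m}"
  unfolding maximizers_def by auto

lemma maxi_opt: "S \<in> maximizers m b chi i \<Longrightarrow> S' \<subseteq> {0..<m} \<Longrightarrow> util b chi i S' \<le> util b chi i S"
  unfolding maximizers_def by auto

lemma maxiI: "S \<subseteq> {0..<m} \<Longrightarrow> (\<And>S'. S' \<subseteq> {0..<m} \<Longrightarrow> util b chi i S' \<le> util b chi i S)
   \<Longrightarrow> S \<in> maximizers m b chi i"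
  unfolding maximizers_def by auto

lemma dc_in: "\<exists>D. D \<in> maximizers m b chi i \<and> card D = demand_card m b chi i"
proof -
  have "demand_card m b chi i \<in> card ` maximizers m b chi i"
    unfolding demand_card_def using maxi_ex[of m b chi i] maxi_fin[of m b chi i]
    by (intro Max_in) auto
  then show ?thesis by auto
qed

lemma dc_ge: "S \<in> maximizers m b chi i \<Longrightarrow> card S \<le> demand_card m b chi i"
  unfolding demand_card_def using maxi_fin[of m b chi i] by (intro Max_ge) auto

lemma card_sub_m: "S \<subseteq> {0..<m} \<Longrightarrow> card S \<le> m"
  using card_mono[of "{0..<m}" S] by simp

lemma dc_le: "demand_card m b chi i \<le> m"
proof -
  obtain D where "D \<in> maximizers m b chi i" "card D = demand_card m b chi i"
    using dc_in by blast
  then show ?thesis using card_sub_m[OF maxi_sub] by metis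
qed

lemma card_demand: "card (demand m b chi i) = demand_card m b chi i"
  by (simp add: demand_eq card_PP dc_le)

lemma PP_Suc:
  assumes "e < m" "rk m chi e = j"
  shows "PP m chi (Suc j) = insert e (PP m chi j)"
proof
  show "PP m chi (Suc j) \<subseteq> insert e (PP m chi j)"
  proof
    fix x assume x: "x \<in> PP m chi (Suc j)"
    then have xm: "x < m" and xr: "rk m chi x < Suc j" unfolding PP_def by auto
    show "x \<in> insert e (PP m chi j)"
    proof (cases "rk m chi x = j")
      case True
      then have "x = e" using inj_onD[OF rk_inj[of m chi], of x e] xm assms by simp
      then show ?thesis by simp
    next
      case False
      then show ?thesis using xm xr unfolding PP_def by simp
    qed
  qed
  show "insert e (PP m chi j) \<subseteq> PP m chi (Suc j)"
    using assms unfolding PP_def by auto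
qed

lemma key:
  assumes sym: "symmetric_on {0..<m} (b p)" and sub: "submodular_on {0..<m} (b p)"
    and a: "a \<le> demand_card m b chi p"
    and eq: "\<And>j. j \<in> PP m chi a \<Longrightarrow> chi' j = chi j"
    and ge: "\<And>j. j < m \<Longrightarrow> chi j \<le> chi' j"
  shows "a \<le> demand_card m b chi' p"
proof -
  define K where "K = demand_card m b chi p"
  obtain D where D: "D \<in> maximizers m b chi p" "card D = K"
    using dc_in unfolding K_def by blast
  have Km: "K \<le> m" unfolding K_def by (rule dc_le)
  have aK: "a \<le> K" using a K_def by simp
  define u where "u k = util b chi p (PP m chi k)" for k
  have symE: "b p S = b p S'" if "S \<subseteq> {0..<m}" "S' \<subseteq> {0..<m}" "card S = card S'" for S S'
    using sym that unfolding symmetric_on_def by blast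
  have Dsub: "D \<subseteq> {0..<m}" using D(1) by (rule maxi_sub)
  have uD: "util b chi p D \<le> u K"
  proof -
    have "b p D = b p (PP m chi K)"
      using symE[OF Dsub PP_sub] card_PP[OF Km] D(2) by simp
    moreover have "sum chi (PP m chi K) \<le> sum chi D"
      using prefix_sum[OF Dsub] D(2) by simp
    ultimately show ?thesis unfolding u_def util_def by simp
  qed
  have PKmax: "util b chi p S' \<le> u K" if "S' \<subseteq> {0..<m}" for S'
    using maxi_opt[OF D(1) that] uD by linarith
  have step: "u j \<le> u (Suc j)" if jK: "j < K" for j
  proof -
    obtain e where e: "e < m" "rk m chi e = j" using rk_ex[of j m chi] jK Km by auto
    have PS: "PP m chi (Suc j) = insert e (PP m chi j)" using PP_Suc[OF e] .
    have eP: "e \<notin> PP m chi j" using e unfolding PP_def by simp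
    have eK: "e \<in> PP m chi K" using e jK unfolding PP_def by simp
    have sub1: "PP m chi j \<subseteq> PP m chi K - {e}" using eP jK unfolding PP_def by auto
    have sub2: "PP m chi K - {e} \<subseteq> {0..<m}" using PP_sub by blast
    have eU: "e \<in> {0..<m} - (PP m chi K - {e})" using e by simp
    have sm: "b p (insert e (PP m chi j)) - b p (PP m chi j)
        \<ge> b p (insert e (PP m chi K - {e})) - b p (PP m chi K - {e})"
      using sub sub1 sub2 eU unfolding submodular_on_def by blast
    have ins: "insert e (PP m chi K - {e}) = PP m chi K" using eK by blast
    have fK: "finite (PP m chi K)" using finite_subset[OF PP_sub] by simp
    have fj: "finite (PP m chi j)" using finite_subset[OF PP_sub] by simp
    have opt: "util b chi p (PP m chi K - {e}) \<le> u K" using PKmax[OF sub2] .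
    have sK: "sum chi (PP m chi K) = chi e + sum chi (PP m chi K - {e})"
      using sum.remove[OF fK eK] .
    have sj: "sum chi (insert e (PP m chi j)) = chi e + sum chi (PP m chi j)"
      using sum.insert[OF fj eP] .
    show ?thesis using sm ins opt sK sj PS unfolding u_def util_def by simp
  qed
  have mono: "u j \<le> u a'" if "a' \<le> K" "j \<le> a'" for j a'
    using that
  proof (induction a')
    case 0 then show ?case by simp
  next
    case (Suc a')
    show ?case
    proof (cases "j = Suc a'")
      case True then show ?thesis by simp
    next
      case False
      then have "u j \<le> u a'" using Suc by simp
      moreover have "u a' \<le> u (Suc a')" using step Suc.prems by simp
      ultimately show ?thesis by linarith
    qed
  qed
  have Pa_sub: "PP m chi a \<subseteq> {0..<m}" by (rule PP_sub)
  have ua: "u a = util b chi' p (PP m chi a)"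
  proof -
    have "sum chi (PP m chi a) = sum chi' (PP m chi a)" using eq by (intro sum.cong) auto
    then show ?thesis unfolding u_def util_def by simp
  qed
  have bound: "util b chi' p S \<le> util b chi' p (PP m chi a)" if S: "S \<subseteq> {0..<m}" "card S < a" for S
  proof -
    have "sum chi S \<le> sum chi' S" using ge S(1) by (intro sum_mono) auto
    then have "util b chi' p S \<le> util b chi p S" unfolding util_def by simp
    also have "util b chi p S \<le> u (card S)"
    proof -
      have cS: "card S \<le> m" using card_sub_m[OF S(1)] .
      have "b p S = b p (PP m chi (card S))"
        using symE[OF S(1) PP_sub] card_PP[OF cS] by simp
      then show ?thesis using prefix_sum[OF S(1)] unfolding u_def util_def by simp
    qed
    also have "u (card S) \<le> u a" using mono[OF aK] S(2) by simp
    finally show ?thesis using ua by simp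
  qed
  obtain M where M: "M \<in> maximizers m b chi' p" "card M = demand_card m b chi' p"
    using dc_in by blast
  show ?thesis
  proof (rule ccontr)
    assume "\<not> a \<le> demand_card m b chi' p"
    then have cM: "card M < a" using M(2) by simp
    have "util b chi' p M \<le> util b chi' p (PP m chi a)" using bound[OF maxi_sub[OF M(1)] cM] .
    then have "PP m chi a \<in> maximizers m b chi' p"
      using maxi_opt[OF M(1)] Pa_sub by (intro maxiI) (auto intro: order_trans)
    then have "card (PP m chi a) \<le> demand_card m b chi' p" by (rule dc_ge)
    then show False using card_PP[of a m chi] aK Km \<open>\<not> a \<le> demand_card m b chi' p\<close> by simp
  qed
qed

lemma rk_pres:
  assumes eq: "\<And>j. j \<in> PP m chi a \<Longrightarrow> chi' j = chi j"
    and ge: "\<And>j. j < m \<Longrightarrow> chi j \<le> chi' j"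
    and j: "j \<in> PP m chi a"
  shows "rk m chi' j = rk m chi j"
proof -
  have jm: "j < m" and ja: "rk m chi j < a" using j unfolding PP_def by auto
  have "{x \<in> {0..<m}. item_before chi' x j} = {x \<in> {0..<m}. item_before chi x j}"
  proof (intro Collect_cong conj_cong refl)
    fix x assume x: "x \<in> {0..<m}"
    show "item_before chi' x j = item_before chi x j"
    proof (cases "x \<in> PP m chi a")
      case True
      then show ?thesis using eq j unfolding item_before_def by simp
    next
      case False
      then have "\<not> rk m chi x < a" using x unfolding PP_def by simp
      then have "rk m chi j < rk m chi x" using ja by simp
      then have ib: "item_before chi j x" using rk_order[OF jm] x by simp
      have ej: "chi' j = chi j" using eq j by simp
      have gx: "chi x \<le> chi' x" using ge x by simp
      have "item_before chi' j x" using ib ej gx unfolding item_before_def by auto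
      then show ?thesis using ib ib_asym by blast
    qed
  qed
  then show ?thesis unfolding rk_def by simp
qed

lemma chosen_prop:
  assumes "finite X" "X \<noteq> {}"
  shows "chosen m b (X, T, chi) \<in> X \<and>
    (\<forall>i'\<in>X. card (demand m b chi (chosen m b (X, T, chi))) \<le> card (demand m b chi i'))"
proof -
  let ?f = "\<lambda>i. card (demand m b chi i)"
  have "Min (?f ` X) \<in> ?f ` X" using assms by (intro Min_in) auto
  then obtain i0 where i0: "i0 \<in> X" "Min (?f ` X) = ?f i0" by (rule imageE) simp
  have "\<forall>i'\<in>X. ?f i0 \<le> ?f i'" using i0(2) assms(1) Min_le[OF finite_imageI[OF assms(1)]] by (metis imageI)
  then have ex: "i0 \<in> X \<and> (\<forall>i'\<in>X. ?f i0 \<le> ?f i')" using i0(1) by simp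
  show ?thesis unfolding chosen_def using LeastI[of "\<lambda>i. i \<in> X \<and> (\<forall>i'\<in>X. ?f i \<le> ?f i')", OF ex] by simp
qed

lemma step_eq:
  "iacsm_step m b c (X, T, chi) =
    (X - {chosen m b (X, T, chi)},
     \<lambda>j. if j \<notin> demand m b chi (chosen m b (X, T, chi)) then T j - {chosen m b (X, T, chi)} else T j,
     \<lambda>j. if j < m \<and> j \<notin> demand m b chi (chosen m b (X, T, chi)) \<and> T j - {chosen m b (X, T, chi)} \<noteq> {}
          then max (chi j) (c j (T j - {chosen m b (X, T, chi)}) / real (card (T j - {chosen m b (X, T, chi)})))
          else chi j)"
  unfolding iacsm_step_def chosen_bundle_def Let_def by simp

lemma state_Suc: "iacsm_state n m b c (Suc t) = iacsm_step m b c (iacsm_state n m b c t)"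
  unfolding iacsm_state_def by simp

lemma inv: "t \<le> n \<Longrightarrow> fst (iacsm_state n m b c t) \<subseteq> {0..<n} \<and> card (fst (iacsm_state n m b c t)) = n - t"
proof (induction t)
  case 0 then show ?case unfolding iacsm_state_def iacsm_init_def by simp
next
  case (Suc t)
  obtain X T chi where st: "iacsm_state n m b c t = (X, T, chi)" by (cases "iacsm_state n m b c t") auto
  have IH: "X \<subseteq> {0..<n}" "card X = n - t" using Suc st by auto
  have fX: "finite X" using finite_subset[OF IH(1)] by simp
  have "X \<noteq> {}" using IH(2) Suc.prems by auto
  then have ci: "chosen m b (X, T, chi) \<in> X" using chosen_prop[OF fX] by blast
  have "fst (iacsm_state n m b c (Suc t)) = X - {chosen m b (X, T, chi)}"
    using state_Suc st step_eq by simp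
  then show ?case using IH fX ci by auto
qed

theorem mainTheorem5:
  fixes n m :: nat
    and b :: "nat \<Rightarrow> nat set \<Rightarrow> real"
    and c :: "nat \<Rightarrow> nat set \<Rightarrow> real"
  assumes b_nonneg: "\<And>i S. i < n \<Longrightarrow> S \<subseteq> {0..<m} \<Longrightarrow> b i S \<ge> 0"
    and b_mono: "\<And>i S S'. i < n \<Longrightarrow> S \<subseteq> S' \<Longrightarrow> S' \<subseteq> {0..<m} \<Longrightarrow> b i S \<le> b i S'"
    and b_sym: "\<And>i. i < n \<Longrightarrow> symmetric_on {0..<m} (b i)"
    and b_submod: "\<And>i. i < n \<Longrightarrow> submodular_on {0..<m} (b i)"
    and c_nonneg: "\<And>j S. j < m \<Longrightarrow> S \<subseteq> {0..<n} \<Longrightarrow> c j S \<ge> 0"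
  shows "\<forall>t. Suc t < n \<longrightarrow> iacsm_bundle n m b c t \<subseteq> iacsm_bundle n m b c (Suc t)"
proof (intro allI impI)
  fix t assume t: "Suc t < n"
  obtain X T chi where st: "iacsm_state n m b c t = (X, T, chi)" by (cases "iacsm_state n m b c t") auto
  define i where "i = chosen m b (X, T, chi)"
  define A where "A = demand m b chi i"
  define T' where "T' = (\<lambda>j. if j \<notin> A then T j - {i} else T j)"
  define chi' where "chi' = (\<lambda>j. if j < m \<and> j \<notin> A \<and> T j - {i} \<noteq> {}
          then max (chi j) (c j (T j - {i}) / real (card (T j - {i}))) else chi j)"
  have st1: "iacsm_state n m b c (Suc t) = (X - {i}, T', chi')"
    using state_Suc[of n m b c t] st step_eq[of m b c X T chi]
    unfolding i_def A_def T'_def chi'_def by simp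
  have b0: "iacsm_bundle n m b c t = A"
    unfolding iacsm_bundle_def st chosen_bundle_def A_def i_def by simp
  define p where "p = chosen m b (X - {i}, T', chi')"
  have b1: "iacsm_bundle n m b c (Suc t) = demand m b chi' p"
    unfolding iacsm_bundle_def st1 chosen_bundle_def p_def by simp
  have I0: "X \<subseteq> {0..<n}" "card X = n - t" using inv[of t n m b c] t st by auto
  have I1: "X - {i} \<subseteq> {0..<n}" "card (X - {i}) = n - Suc t"
    using inv[of "Suc t" n m b c] t st1 by auto
  have fX: "finite X" using finite_subset[OF I0(1)] by simp
  have "X \<noteq> {}" using I0(2) t by auto
  then have cp0: "\<forall>i'\<in>X. card (demand m b chi i) \<le> card (demand m b chi i')"
    using chosen_prop[OF fX, of m b T chi] unfolding i_def by blast
  have "card (X - {i}) > 0" using I1(2) t by simp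
  then have "X - {i} \<noteq> {}" by (metis card.empty less_irrefl)
  then have pX: "p \<in> X - {i}" using chosen_prop[of "X - {i}" m b T' chi'] fX unfolding p_def by blast
  then have pn: "p < n" using I0(1) by auto
  define a where "a = demand_card m b chi i"
  have aK: "a \<le> demand_card m b chi p"
    using cp0 pX unfolding a_def by (simp add: card_demand)
  have AP: "A = PP m chi a" unfolding A_def a_def by (rule demand_eq)
  have eq: "chi' j = chi j" if "j \<in> PP m chi a" for j
    using that AP unfolding chi'_def by simp
  have ge: "chi j \<le> chi' j" if "j < m" for j
    unfolding chi'_def by simp
  have aK': "a \<le> demand_card m b chi' p"
    using key[OF b_sym[OF pn] b_submod[OF pn] aK eq ge] by blast
  show "iacsm_bundle n m b c t \<subseteq> iacsm_bundle n m b c (Suc t)"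
  proof
    fix j assume "j \<in> iacsm_bundle n m b c t"
    then have jA: "j \<in> PP m chi a" using b0 AP by simp
    have "rk m chi' j = rk m chi j" using rk_pres[OF _ _ jA, of chi'] eq ge by blast
    moreover have "j < m" "rk m chi j < a" using jA unfolding PP_def by auto
    ultimately have "j \<in> PP m chi' (demand_card m b chi' p)" using aK' unfolding PP_def by simp
    then show "j \<in> iacsm_bundle n m b c (Suc t)" using b1 demand_eq by simp
  qed
qed

end
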